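(* Let $F_1$ and $F_2$ be two rooted general $X$-forests, and let $S$ be a maximal sibling set of $F_2$ such that all labels in $S$ are siblings in $F_1$. For any maximal agreement forest $F$ for $F_1$ and $F_2$, if two labels in $S$ are siblings in $F$, then all labels in $S$ form a maximal sibling set in $F$.
   Context: Let $X$ be a finite label set containing $\rho$. A rooted general $X$-forest is a subgraph of a tree whose leaves are bijectively labeled by $X$, whose unlabeled vertices have degree at least 3, and whose leaf $\rho$ is the root; each component contains a leaf, the component label sets partition $X$, and each component is rooted at $\rho$ if it contains it, otherwise at the lowest common ancestor (in the underlying tree) of its labeled leaves. Forests are taken up to forced contraction (non-root unlabeled degree-2 vertices suppressed, unlabeled vertices of degree $<2$ deleted). $\mathrm{Ord}(F)$ is the number of components; $F'$ is a subforest of $F$ if, up to forced contraction, it is isomorphic (preserving labels and roots) to $F$ with some edges deleted; an agreement forest for $F_1,F_2$ is an $X$-forest that is a subforest of both; it is a maximal agreement forest if no agreement forest $F'$ for $F_1,F_2$ contains it as a subforest with $\mathrm{Ord}(F')<\mathrm{Ord}(F)$. Two leaves are siblings if they have a common parent; a sibling set is a set of leaves that are pairwise siblings; a maximal sibling set is a sibling set $S$ whose common parent $p$ has degree $|S|$ if $p$ has no parent, or $|S|+1$ if $p$ has a parent. *)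

theory Defs
  imports Main
begin

text \<open>
A rooted general X-forest, taken up to forced
contraction and isomorphism preserving labels and roots, is represented by its
set of vertex clusters: each vertex v is represented by the set of labels of the
leaves that are descendants of v (v included) in its component, oriented away
from the component root.  The leaf x (x different from rho) is the cluster {x};
the root leaf rho is the cluster of all labels of its component.
\<close>

definition laminar :: "'a set set \<Rightarrow> bool" where
  "laminar F \<longleftrightarrow> (\<forall>A\<in>F. \<forall>B\<in>F. A \<inter> B = {} \<or> A \<subseteq> B \<or> B \<subseteq> A)"

definition is_forest :: "'a set \<Rightarrow> 'a \<Rightarrow> 'a set set \<Rightarrow> bool" where
  "is_forest X rho F \<longleftrightarrow>
     F \<subseteq> Pow X \<and> {} \<notin> F \<and> laminar F \<and>
     (\<forall>x\<in>X - {rho}. {x} \<in> F) \<and>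
     (\<exists>!C. C \<in> F \<and> rho \<in> C) \<and>
     (\<forall>C\<in>F. rho \<in> C \<and> C \<noteq> {rho} \<longrightarrow> C - {rho} \<in> F)"

definition is_parent :: "'a set set \<Rightarrow> 'a set \<Rightarrow> 'a set \<Rightarrow> bool" where
  "is_parent F C D \<longleftrightarrow> C \<in> F \<and> D \<in> F \<and> C \<subset> D \<and> \<not> (\<exists>E\<in>F. C \<subset> E \<and> E \<subset> D)"

definition has_parent :: "'a set set \<Rightarrow> 'a set \<Rightarrow> bool" where
  "has_parent F C \<longleftrightarrow> (\<exists>D. is_parent F C D)"

definition children :: "'a set set \<Rightarrow> 'a set \<Rightarrow> 'a set set" where
  "children F P = {C. is_parent F C P}"

definition degree :: "'a set set \<Rightarrow> 'a set \<Rightarrow> nat" where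
  "degree F P = card (children F P) + (if has_parent F P then 1 else 0)"

definition leafv :: "'a set set \<Rightarrow> 'a \<Rightarrow> 'a set \<Rightarrow> bool" where
  "leafv F x C \<longleftrightarrow> C \<in> F \<and> x \<in> C \<and> (\<forall>D\<in>F. x \<in> D \<longrightarrow> C \<subseteq> D)"

definition leaf_parent :: "'a set set \<Rightarrow> 'a \<Rightarrow> 'a set \<Rightarrow> bool" where
  "leaf_parent F x P \<longleftrightarrow> (\<exists>C. leafv F x C \<and> is_parent F C P)"

definition siblings :: "'a set set \<Rightarrow> 'a \<Rightarrow> 'a \<Rightarrow> bool" where
  "siblings F a b \<longleftrightarrow> (\<exists>P. leaf_parent F a P \<and> leaf_parent F b P)"

definition sibling_set :: "'a set set \<Rightarrow> 'a set \<Rightarrow> bool" where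
  "sibling_set F S \<longleftrightarrow> (\<forall>a\<in>S. \<forall>b\<in>S. a \<noteq> b \<longrightarrow> siblings F a b)"

definition max_sibling_set :: "'a set set \<Rightarrow> 'a set \<Rightarrow> bool" where
  "max_sibling_set F S \<longleftrightarrow> sibling_set F S \<and> S \<noteq> {} \<and>
     (\<exists>P. (\<forall>a\<in>S. leaf_parent F a P) \<and>
          degree F P = (if has_parent F P then card S + 1 else card S))"

definition edges :: "'a set set \<Rightarrow> ('a set \<times> 'a set) set" where
  "edges F = {(C, D). is_parent F C D}"

definition cluster_after :: "'a set set \<Rightarrow> ('a set \<times> 'a set) set \<Rightarrow> 'a set \<Rightarrow> 'a set" where
  "cluster_after F K V = {x. \<exists>C. leafv F x C \<and> (C, V) \<in> K\<^sup>*}"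

text \<open>The forest obtained from F by deleting all edges not in K, followed by forced
contraction (vertices with empty cluster disappear, suppressed vertices merge).\<close>
definition delete_edges :: "'a set set \<Rightarrow> ('a set \<times> 'a set) set \<Rightarrow> 'a set set" where
  "delete_edges F K = (cluster_after F K ` F) - {{}}"

definition subforest :: "'a set set \<Rightarrow> 'a set set \<Rightarrow> bool" where
  "subforest F' F \<longleftrightarrow> (\<exists>K \<subseteq> edges F. F' = delete_edges F K)"

definition components :: "'a set set \<Rightarrow> 'a set set" where
  "components F = {C \<in> F. \<not> (\<exists>D\<in>F. C \<subset> D)}"

definition Ord :: "'a set set \<Rightarrow> nat" where
  "Ord F = card (components F)"

definition agreement_forest :: "'a set \<Rightarrow> 'a \<Rightarrow> 'a set set \<Rightarrow> 'a set set \<Rightarrow> 'a set set \<Rightarrow> bool" where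
  "agreement_forest X rho F1 F2 F \<longleftrightarrow> is_forest X rho F \<and> subforest F F1 \<and> subforest F F2"

definition maximal_agreement_forest :: "'a set \<Rightarrow> 'a \<Rightarrow> 'a set set \<Rightarrow> 'a set set \<Rightarrow> 'a set set \<Rightarrow> bool" where
  "maximal_agreement_forest X rho F1 F2 F \<longleftrightarrow> agreement_forest X rho F1 F2 F \<and>
     \<not> (\<exists>F'. agreement_forest X rho F1 F2 F' \<and> subforest F F' \<and> Ord F' < Ord F)"

end

theory Submission
  imports Defs
begin

lemma forest_basic:
  assumes "is_forest X rho H"
  shows "H \<subseteq> Pow X" "{} \<notin> H" "laminar H" "\<And>x. x \<in> X \<Longrightarrow> x \<noteq> rho \<Longrightarrow> {x} \<in> H"
    "\<exists>!C. C \<in> H \<and> rho \<in> C" "\<And>C. C \<in> H \<Longrightarrow> rho \<in> C \<Longrightarrow> C \<noteq> {rho} \<Longrightarrow> C - {rho} \<in> H"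
proof -
  note d = assms[unfolded is_forest_def]
  show "H \<subseteq> Pow X" using d by (elim conjE)
  show "{} \<notin> H" using d by (elim conjE)
  show "laminar H" using d by (elim conjE)
  show "\<exists>!C. C \<in> H \<and> rho \<in> C" using d by (elim conjE)
  show "\<And>x. x \<in> X \<Longrightarrow> x \<noteq> rho \<Longrightarrow> {x} \<in> H"
  proof -
    fix x assume "x \<in> X" "x \<noteq> rho"
    moreover have "\<forall>x\<in>X - {rho}. {x} \<in> H" using d by (elim conjE)
    ultimately show "{x} \<in> H" by blast
  qed
  show "\<And>C. C \<in> H \<Longrightarrow> rho \<in> C \<Longrightarrow> C \<noteq> {rho} \<Longrightarrow> C - {rho} \<in> H"
  proof -
    fix C assume "C \<in> H" "rho \<in> C" "C \<noteq> {rho}"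
    moreover have "\<forall>C\<in>H. rho \<in> C \<and> C \<noteq> {rho} \<longrightarrow> C - {rho} \<in> H" using d by (elim conjE)
    ultimately show "C - {rho} \<in> H" by blast
  qed
qed

lemma rho_unique:
  assumes "is_forest X rho H" "C \<in> H" "D \<in> H" "rho \<in> C" "rho \<in> D"
  shows "C = D"
  using forest_basic(5)[OF assms(1)] assms(2-5) by blast

lemma parent_unique:
  assumes "laminar H" "{} \<notin> H" "is_parent H C D1" "is_parent H C D2"
  shows "D1 = D2"
proof -
  have p1: "C \<in> H" "D1 \<in> H" "C \<subset> D1" "\<not> (\<exists>E\<in>H. C \<subset> E \<and> E \<subset> D1)"
    using assms(3) unfolding is_parent_def by blast+
  have p2: "D2 \<in> H" "C \<subset> D2" "\<not> (\<exists>E\<in>H. C \<subset> E \<and> E \<subset> D2)"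
    using assms(4) unfolding is_parent_def by blast+
  have "C \<noteq> {}" using assms(2) p1(1) by blast
  then obtain y where "y \<in> C" by blast
  then have "y \<in> D1 \<inter> D2" using p1(3) p2(2) by blast
  then have "D1 \<inter> D2 \<noteq> {}" by blast
  then have "D1 \<subseteq> D2 \<or> D2 \<subseteq> D1" using assms(1) p1(2) p2(1) unfolding laminar_def by blast
  then show ?thesis
  proof
    assume h: "D1 \<subseteq> D2"
    show ?thesis
    proof (rule ccontr)
      assume "D1 \<noteq> D2" then have "D1 \<subset> D2" using h by blast
      then show False using p1(2,3) p2(3) by blast
    qed
  next
    assume h: "D2 \<subseteq> D1"
    show ?thesis
    proof (rule ccontr)
      assume "D1 \<noteq> D2" then have "D2 \<subset> D1" using h by blast
      then show False using p2(1,2) p1(4) by blast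
    qed
  qed
qed

lemma leaf_single:
  assumes "is_forest X rho H" "x \<in> X" "x \<noteq> rho"
  shows "leafv H x {x}"
  using forest_basic(4)[OF assms] unfolding leafv_def by blast

lemma leafv_unique:
  assumes "leafv H x C1" "leafv H x C2" shows "C1 = C2"
proof -
  have a: "C1 \<in> H" "x \<in> C1" "\<forall>D\<in>H. x \<in> D \<longrightarrow> C1 \<subseteq> D" using assms(1) unfolding leafv_def by blast+
  have b: "C2 \<in> H" "x \<in> C2" "\<forall>D\<in>H. x \<in> D \<longrightarrow> C2 \<subseteq> D" using assms(2) unfolding leafv_def by blast+
  have "C1 \<subseteq> C2" using a(3) b(1,2) by blast
  moreover have "C2 \<subseteq> C1" using b(3) a(1,2) by blast
  ultimately show ?thesis by (rule subset_antisym)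
qed

lemma leaf_exists:
  assumes "is_forest X rho H" "x \<in> X"
  shows "\<exists>C. leafv H x C"
proof (cases "x = rho")
  case True
  obtain C where C: "C \<in> H" "rho \<in> C" using forest_basic(5)[OF assms(1)] by (meson ex1_implies_ex)
  have "\<forall>D\<in>H. rho \<in> D \<longrightarrow> C \<subseteq> D"
  proof (intro ballI impI)
    fix D assume "D \<in> H" "rho \<in> D"
    then have "C = D" using rho_unique[OF assms(1) C(1)] C(2) by simp
    then show "C \<subseteq> D" by simp
  qed
  then have "leafv H x C" using C True unfolding leafv_def by simp
  then show ?thesis by (rule exI)
next
  case False then show ?thesis using leaf_single assms by (meson exI)
qed

lemma path_subset:
  assumes "K \<subseteq> edges H" "(A,B) \<in> K\<^sup>*" shows "A \<subseteq> B"
  using assms(2) proof (induction rule: rtrancl_induct)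
  case base then show ?case by simp
next
  case (step y z)
  then have "is_parent H y z" using assms(1) unfolding edges_def by blast
  then have "y \<subseteq> z" unfolding is_parent_def by (meson psubset_imp_subset)
  then show ?case using step.IH by (rule order_trans[rotated])
qed

lemma path_first:
  assumes "laminar H" "{} \<notin> H" "K \<subseteq> edges H" "(C,V) \<in> K\<^sup>*" "C \<noteq> V" "is_parent H C D"
  shows "(C,D) \<in> K \<and> (D,V) \<in> K\<^sup>*"
proof -
  from assms(4,5) obtain y where y: "(C,y) \<in> K" "(y,V) \<in> K\<^sup>*"
    by (metis converse_rtranclE)
  then have "is_parent H C y" using assms(3) unfolding edges_def by auto
  then have "y = D" using parent_unique[OF assms(1,2) _ assms(6)] by blast
  then show ?thesis using y by simp
qed

lemma path_up:
  assumes "finite H" "\<forall>E\<in>H. finite E" "C \<in> H" "V \<in> H" "C \<subseteq> V" "x \<in> C"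
  shows "(C,V) \<in> {(D,E). is_parent H D E \<and> x \<in> D}\<^sup>*"
  using assms
proof (induction "card (V - C)" arbitrary: C rule: less_induct)
  case less
  show ?case
  proof (cases "C = V")
    case True then show ?thesis by simp
  next
    case False
    define M where "M = {E \<in> H. C \<subset> E \<and> E \<subseteq> V}"
    have "C \<subset> V" using False less.prems(5) by (simp add: psubset_eq)
    then have VM: "V \<in> M" using less.prems(4) unfolding M_def by simp
    have "M \<subseteq> H" unfolding M_def by (rule Collect_subset)
    then have fM: "finite M" using less.prems(1) by (rule finite_subset)
    obtain D where D: "D \<in> M" "\<forall>E\<in>M. E \<le> D \<longrightarrow> D = E"
      using finite_has_minimal[OF fM] VM by blast
    have DH: "D \<in> H" "C \<subset> D" "D \<subseteq> V" using D(1) unfolding M_def by simp_all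
    have nb: "\<not>(\<exists>E\<in>H. C \<subset> E \<and> E \<subset> D)"
    proof
      assume "\<exists>E\<in>H. C \<subset> E \<and> E \<subset> D"
      then obtain E where E: "E \<in> H" "C \<subset> E" "E \<subset> D" by blast
      have "E \<subseteq> V" using E(3) DH(3) by (meson order.trans psubset_imp_subset)
      then have "E \<in> M" using E unfolding M_def by simp
      then have "D = E" using D(2) E(3) by (meson psubset_imp_subset)
      then show False using E(3) by simp
    qed
    have par: "is_parent H C D"
      unfolding is_parent_def using less.prems(3) DH nb by simp
    have fV: "finite V" using less.prems(2,4) by simp
    have "V - D \<subset> V - C" using DH(2,3) by blast
    then have "card (V - D) < card (V - C)" using fV by (meson finite_Diff psubset_card_mono)
    moreover have "x \<in> D" using DH(2) less.prems(6) by blast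
    ultimately have "(D,V) \<in> {(D,E). is_parent H D E \<and> x \<in> D}\<^sup>*"
      using less.hyps less.prems(1,2,4) DH(1,3) by blast
    moreover have "(C,D) \<in> {(D,E). is_parent H D E \<and> x \<in> D}" using par less.prems(6) by simp
    ultimately show ?thesis by (meson converse_rtrancl_into_rtrancl)
  qed
qed

lemma mem_cluster:
  assumes "is_forest X rho G" "x \<in> X" "x \<noteq> rho"
  shows "x \<in> cluster_after G K V \<longleftrightarrow> ({x},V) \<in> K\<^sup>*"
proof -
  have L: "\<And>C. leafv G x C \<longleftrightarrow> C = {x}" using leaf_single[OF assms] leafv_unique by metis
  show ?thesis unfolding cluster_after_def using L by simp
qed

lemma cluster_mono:
  "(V,W) \<in> K\<^sup>* \<Longrightarrow> cluster_after G K V \<subseteq> cluster_after G K W"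
  unfolding cluster_after_def by (auto intro: rtrancl_trans)

lemma cluster_sub:
  assumes "K \<subseteq> edges G" shows "cluster_after G K V \<subseteq> V"
proof
  fix x assume "x \<in> cluster_after G K V"
  then obtain C where C: "leafv G x C" "(C,V) \<in> K\<^sup>*" unfolding cluster_after_def by blast
  have "C \<subseteq> V" using path_subset[OF assms C(2)] .
  moreover have "x \<in> C" using C(1) unfolding leafv_def by simp
  ultimately show "x \<in> V" by blast
qed

lemma parent_no_rho:
  assumes "is_forest X rho F" "is_parent F {a} P" "is_parent F {b} P" "a \<noteq> b"
  shows "rho \<notin> P"
proof
  assume r: "rho \<in> P"
  have PF: "P \<in> F" "{a} \<in> F" "{b} \<in> F" "{a} \<subset> P" "{b} \<subset> P"
    using assms(2,3) unfolding is_parent_def by simp_all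
  have "a \<noteq> rho"
  proof
    assume "a = rho" then have "{a} = P" using rho_unique[OF assms(1) PF(2) PF(1)] r by simp
    then show False using PF(4) by simp
  qed
  have "b \<noteq> rho"
  proof
    assume "b = rho" then have "{b} = P" using rho_unique[OF assms(1) PF(3) PF(1)] r by simp
    then show False using PF(5) by simp
  qed
  have "b \<in> P" "a \<in> P" using PF(4,5) by auto
  have "P \<noteq> {rho}" using \<open>a \<in> P\<close> \<open>a \<noteq> rho\<close> by blast
  then have "P - {rho} \<in> F" using forest_basic(6)[OF assms(1) PF(1) r] by simp
  have nb: "\<not> (\<exists>E\<in>F. {a} \<subset> E \<and> E \<subset> P)" using assms(2) unfolding is_parent_def by simp
  have s1: "{a} \<subseteq> P - {rho}" using \<open>a \<noteq> rho\<close> \<open>a \<in> P\<close> by simp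
  have "b \<in> P - {rho}" "b \<notin> {a}" using \<open>b \<noteq> rho\<close> \<open>b \<in> P\<close> assms(4) by auto
  then have s2: "{a} \<noteq> P - {rho}" by metis
  have s3: "P - {rho} \<subseteq> P" by (rule Diff_subset)
  have s4: "P - {rho} \<noteq> P" using r by blast
  have "{a} \<subset> P - {rho} \<and> P - {rho} \<subset> P" using s1 s2 s3 s4 by (simp add: psubset_eq)
  then show False using nb \<open>P - {rho} \<in> F\<close> by metis
qed


lemma lp_single:
  assumes H: "is_forest X rho H" and lp: "leaf_parent H s P"
  shows "s \<in> X" "s \<noteq> rho" "is_parent H {s} P"
proof -
  obtain C where C: "leafv H s C" "is_parent H C P" using lp unfolding leaf_parent_def by blast
  have CH: "C \<in> H" "s \<in> C" using C(1) unfolding leafv_def by simp_all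
  have PH: "P \<in> H" "C \<subset> P" using C(2) unfolding is_parent_def by simp_all
  have "C \<subseteq> X" using forest_basic(1)[OF H] CH(1) by blast
  then show sX: "s \<in> X" using CH(2) by blast
  show sr: "s \<noteq> rho"
  proof
    assume "s = rho"
    moreover have "s \<in> P" using CH(2) PH(2) by blast
    ultimately have "C = P" using rho_unique[OF H CH(1) PH(1)] CH(2) by simp
    then show False using PH(2) by simp
  qed
  have "C = {s}" using leafv_unique[OF C(1) leaf_single[OF H sX sr]] .
  then show "is_parent H {s} P" using C(2) by simp
qed

lemma key:
  assumes G: "is_forest X rho G" and Ff: "is_forest X rho F"
    and K: "K \<subseteq> edges G" and FK: "F = delete_edges G K"
    and pa: "is_parent F {a} P" and pb: "is_parent F {b} P" and ab: "a \<noteq> b"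
    and aX: "a \<in> X" "a \<noteq> rho" and bX: "b \<in> X" "b \<noteq> rho"
    and qa: "is_parent G {a} q" and qb: "is_parent G {b} q"
  shows "P = cluster_after G K q"
    and "\<And>V. (q,V) \<in> K\<^sup>* \<longleftrightarrow> P \<subseteq> cluster_after G K V"
    and "\<And>s. is_parent G {s} q \<Longrightarrow> s \<in> P \<Longrightarrow> s \<in> X \<Longrightarrow> s \<noteq> rho \<Longrightarrow> is_parent F {s} P"
proof -
  have lam: "laminar G" "{} \<notin> G" using forest_basic[OF G] by simp_all
  have PF: "P \<in> F" "{a} \<subset> P" "{b} \<subset> P" using pa pb unfolding is_parent_def by simp_all
  have nbP: "\<not>(\<exists>E\<in>F. {a} \<subset> E \<and> E \<subset> P)" using pa unfolding is_parent_def by simp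
  have aP: "a \<in> P" and bP: "b \<in> P" using PF by auto
  have qG: "q \<in> G" using qa unfolding is_parent_def by simp
  have memF: "\<And>W. W \<in> G \<Longrightarrow> cluster_after G K W \<noteq> {} \<Longrightarrow> cluster_after G K W \<in> F"
    using FK unfolding delete_edges_def by blast
  have inF: "\<And>E. E \<in> F \<Longrightarrow> \<exists>W\<in>G. E = cluster_after G K W"
    using FK unfolding delete_edges_def by blast
  obtain V where V: "V \<in> G" "P = cluster_after G K V" using inF[OF PF(1)] by blast
  have aV: "({a},V) \<in> K\<^sup>*" using mem_cluster[OF G aX] aP V(2) by simp
  have bV: "({b},V) \<in> K\<^sup>*" using mem_cluster[OF G bX] bP V(2) by simp
  have "{b} \<subseteq> V" using path_subset[OF K bV] .
  then have "{a} \<noteq> V" using ab by auto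
  then have aq: "({a},q) \<in> K" "(q,V) \<in> K\<^sup>*" using path_first[OF lam K aV _ qa] by simp_all
  have "{a} \<subseteq> V" using path_subset[OF K aV] .
  then have "{b} \<noteq> V" using ab by auto
  then have bq: "({b},q) \<in> K" using path_first[OF lam K bV _ qb] by simp
  have aq': "a \<in> cluster_after G K q" using mem_cluster[OF G aX] aq(1) by (simp add: r_into_rtrancl)
  have bq': "b \<in> cluster_after G K q" using mem_cluster[OF G bX] bq by (simp add: r_into_rtrancl)
  have sub: "cluster_after G K q \<subseteq> P" using cluster_mono[OF aq(2)] V(2) by simp
  have qF: "cluster_after G K q \<in> F" using memF[OF qG] aq' by blast
  show Pq: "P = cluster_after G K q"
  proof (rule ccontr)
    assume "P \<noteq> cluster_after G K q"
    then have h1: "cluster_after G K q \<subset> P" using sub by (simp add: psubset_eq)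
    have "{a} \<subseteq> cluster_after G K q" using aq' by simp
    moreover have "{a} \<noteq> cluster_after G K q" using bq' ab by auto
    ultimately have h2: "{a} \<subset> cluster_after G K q" by (simp add: psubset_eq)
    show False using nbP qF h1 h2 by blast
  qed
  show eqv: "\<And>V. (q,V) \<in> K\<^sup>* \<longleftrightarrow> P \<subseteq> cluster_after G K V"
  proof
    fix W assume "(q,W) \<in> K\<^sup>*"
    then show "P \<subseteq> cluster_after G K W" using cluster_mono Pq by metis
  next
    fix W assume h: "P \<subseteq> cluster_after G K W"
    then have aW: "({a},W) \<in> K\<^sup>*" and bW: "({b},W) \<in> K\<^sup>*"
      using mem_cluster[OF G aX] mem_cluster[OF G bX] aP bP by auto
    have "{b} \<subseteq> W" using path_subset[OF K bW] .
    then have "{a} \<noteq> W" using ab by auto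
    then show "(q,W) \<in> K\<^sup>*" using path_first[OF lam K aW _ qa] by simp
  qed
  show "\<And>s. is_parent G {s} q \<Longrightarrow> s \<in> P \<Longrightarrow> s \<in> X \<Longrightarrow> s \<noteq> rho \<Longrightarrow> is_parent F {s} P"
  proof -
    fix s assume qs: "is_parent G {s} q" and sP: "s \<in> P" and sX: "s \<in> X" "s \<noteq> rho"
    have sF: "{s} \<in> F" using forest_basic(4)[OF Ff sX] .
    have "{s} \<subseteq> P" using sP by simp
    moreover have "{s} \<noteq> P" using aP bP ab by auto
    ultimately have sPs: "{s} \<subset> P" by (simp add: psubset_eq)
    have nb: "\<not>(\<exists>E\<in>F. {s} \<subset> E \<and> E \<subset> P)"
    proof
      assume "\<exists>E\<in>F. {s} \<subset> E \<and> E \<subset> P"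
      then obtain E where E: "E \<in> F" "{s} \<subset> E" "E \<subset> P" by blast
      obtain W where W: "W \<in> G" "E = cluster_after G K W" using inF[OF E(1)] by blast
      have "s \<in> E" using E(2) by blast
      then have sW: "({s},W) \<in> K\<^sup>*" using mem_cluster[OF G sX] W(2) by simp
      have "{s} \<noteq> W"
      proof
        assume "{s} = W"
        then have "E \<subseteq> {s}" using cluster_sub[OF K] W(2) by metis
        then show False using E(2) by blast
      qed
      then have "(q,W) \<in> K\<^sup>*" using path_first[OF lam K sW _ qs] by simp
      then have "P \<subseteq> E" using eqv W(2) by simp
      then show False using E(3) by blast
    qed
    show "is_parent F {s} P" unfolding is_parent_def using sF PF(1) sPs nb by simp
  qed
qed


lemma key2:
  assumes G: "is_forest X rho G" and Ff: "is_forest X rho F"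
    and K: "K \<subseteq> edges G" and FK: "F = delete_edges G K"
    and pa: "is_parent F {a} P" and pb: "is_parent F {b} P" and ab: "a \<noteq> b"
    and aX: "a \<in> X" "a \<noteq> rho" and bX: "b \<in> X" "b \<noteq> rho"
    and qa: "is_parent G {a} q" and qb: "is_parent G {b} q"
    and cX: "c \<in> X" "c \<noteq> rho" and qc: "is_parent G {c} q" and cP: "c \<notin> P"
  shows "({c},q) \<notin> K"
    and "\<forall>B\<in>F. c \<in> B \<longrightarrow> B = {c}"
    and "subforest ((\<lambda>A. if P \<subseteq> A then insert c A else A) ` F) G"
proof -
  note k = key[OF G Ff K FK pa pb ab aX bX qa qb]
  have lam: "laminar G" "{} \<notin> G" using forest_basic[OF G] by simp_all
  show cq: "({c},q) \<notin> K"
  proof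
    assume "({c},q) \<in> K"
    then have "c \<in> cluster_after G K q" using mem_cluster[OF G cX] by (simp add: r_into_rtrancl)
    then show False using k(1) cP by simp
  qed
  have inF: "\<And>E. E \<in> F \<Longrightarrow> \<exists>W\<in>G. E = cluster_after G K W"
    using FK unfolding delete_edges_def by blast
  show "\<forall>B\<in>F. c \<in> B \<longrightarrow> B = {c}"
  proof (intro ballI impI)
    fix B assume B: "B \<in> F" "c \<in> B"
    obtain W where W: "W \<in> G" "B = cluster_after G K W" using inF[OF B(1)] by blast
    have cW: "({c},W) \<in> K\<^sup>*" using mem_cluster[OF G cX] W(2) B(2) by simp
    have "{c} = W"
    proof (rule ccontr)
      assume "{c} \<noteq> W"
      then have "({c},q) \<in> K" using path_first[OF lam K cW _ qc] by simp
      then show False using cq by simp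
    qed
    then have "B \<subseteq> {c}" using cluster_sub[OF K] W(2) by metis
    then show "B = {c}" using B(2) by blast
  qed
  define g where "g = (\<lambda>A. if P \<subseteq> A then insert c A else A)"
  define K' where "K' = insert ({c},q) K"
  have K'E: "K' \<subseteq> edges G" using K qc unfolding K'_def edges_def by simp
  have eq1: "\<And>V. cluster_after G K' V = cluster_after G K V \<union> (if (q,V) \<in> K\<^sup>* then {c} else {})"
  proof (rule set_eqI)
    fix V x
    show "x \<in> cluster_after G K' V \<longleftrightarrow> x \<in> cluster_after G K V \<union> (if (q,V) \<in> K\<^sup>* then {c} else {})"
    proof
      assume "x \<in> cluster_after G K' V"
      then obtain C where C: "leafv G x C" "(C,V) \<in> K'\<^sup>*" unfolding cluster_after_def by blast
      have "(C,V) \<in> K\<^sup>* \<or> ((C,{c}) \<in> K\<^sup>* \<and> (q,V) \<in> K\<^sup>*)" using C(2) unfolding K'_def rtrancl_insert by blast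
      then show "x \<in> cluster_after G K V \<union> (if (q,V) \<in> K\<^sup>* then {c} else {})"
      proof
        assume "(C,V) \<in> K\<^sup>*"
        then show ?thesis using C(1) unfolding cluster_after_def by blast
      next
        assume h: "(C,{c}) \<in> K\<^sup>* \<and> (q,V) \<in> K\<^sup>*"
        then have "C \<subseteq> {c}" using path_subset[OF K] by blast
        moreover have "x \<in> C" using C(1) unfolding leafv_def by simp
        ultimately have "x = c" by blast
        then show ?thesis using h by simp
      qed
    next
      assume h: "x \<in> cluster_after G K V \<union> (if (q,V) \<in> K\<^sup>* then {c} else {})"
      show "x \<in> cluster_after G K' V"
      proof (cases "x \<in> cluster_after G K V")
        case True
        then obtain C where C: "leafv G x C" "(C,V) \<in> K\<^sup>*" unfolding cluster_after_def by blast
        have "K\<^sup>* \<subseteq> K'\<^sup>*" unfolding K'_def by (rule rtrancl_mono) blast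
        then show ?thesis using C unfolding cluster_after_def by blast
      next
        case False
        then have xc: "x = c" "(q,V) \<in> K\<^sup>*" using h by (auto split: if_splits)
        have "K\<^sup>* \<subseteq> K'\<^sup>*" unfolding K'_def by (rule rtrancl_mono) blast
        then have "(q,V) \<in> K'\<^sup>*" using xc(2) by blast
        moreover have "({c},q) \<in> K'" unfolding K'_def by simp
        ultimately have "({c},V) \<in> K'\<^sup>*" by (meson converse_rtrancl_into_rtrancl)
        then show ?thesis using leaf_single[OF G cX] xc(1) unfolding cluster_after_def by blast
      qed
    qed
  qed
  have eq2: "\<And>V. cluster_after G K' V = g (cluster_after G K V)"
  proof -
    fix V
    show "cluster_after G K' V = g (cluster_after G K V)"
    proof (cases "(q,V) \<in> K\<^sup>*")
      case True
      then have "P \<subseteq> cluster_after G K V" using k(2) by simp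
      then show ?thesis using eq1 True unfolding g_def by simp
    next
      case False
      then have "\<not> P \<subseteq> cluster_after G K V" using k(2) by simp
      then show ?thesis using eq1 False unfolding g_def by simp
    qed
  qed
  have Pne: "P \<noteq> {}" using pa unfolding is_parent_def by auto
  have gz: "\<And>A. g A = {} \<longleftrightarrow> A = {}" unfolding g_def using Pne by auto
  have "delete_edges G K' = g ` F"
  proof (rule set_eqI)
    fix y
    show "y \<in> delete_edges G K' \<longleftrightarrow> y \<in> g ` F"
    proof
      assume "y \<in> delete_edges G K'"
      then obtain V where V: "V \<in> G" "y = cluster_after G K' V" "y \<noteq> {}" unfolding delete_edges_def by blast
      then have "y = g (cluster_after G K V)" "cluster_after G K V \<noteq> {}" using eq2 gz by simp_all
      moreover have "cluster_after G K V \<in> F" using FK V(1) calculation(2) unfolding delete_edges_def by blast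
      ultimately show "y \<in> g ` F" by blast
    next
      assume "y \<in> g ` F"
      then obtain A where A: "A \<in> F" "y = g A" by blast
      then obtain V where V: "V \<in> G" "A = cluster_after G K V" "A \<noteq> {}" using FK unfolding delete_edges_def by blast
      then have "y = cluster_after G K' V" "y \<noteq> {}" using A(2) eq2 gz by simp_all
      then show "y \<in> delete_edges G K'" using V(1) unfolding delete_edges_def by blast
    qed
  qed
  then show "subforest ((\<lambda>A. if P \<subseteq> A then insert c A else A) ` F) G"
    unfolding subforest_def g_def using K'E by metis
qed


lemma glue:
  assumes Ff: "is_forest X rho F" and fin: "finite X"
    and cX: "c \<in> X" "c \<noteq> rho" and cB: "\<forall>B\<in>F. c \<in> B \<longrightarrow> B = {c}"
    and PF: "P \<in> F" and abP: "a \<in> P" "b \<in> P" "a \<noteq> b" and rP: "rho \<notin> P" and cP: "c \<notin> P"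
  shows "is_forest X rho ((\<lambda>A. if P \<subseteq> A then insert c A else A) ` F)"
    and "subforest F ((\<lambda>A. if P \<subseteq> A then insert c A else A) ` F)"
    and "Ord ((\<lambda>A. if P \<subseteq> A then insert c A else A) ` F) < Ord F"
proof -
  define g where "g = (\<lambda>A. if P \<subseteq> A then insert c A else A)"
  define F' where "F' = g ` F"
  have FX: "F \<subseteq> Pow X" and Fe: "{} \<notin> F" and Fl: "laminar F" using forest_basic[OF Ff] by simp_all
  have Psing: "\<And>x. \<not> P \<subseteq> {x}" using abP by auto
  have gsing: "\<And>x. g {x} = {x}" unfolding g_def using Psing by simp
  have cF: "{c} \<in> F" using forest_basic(4)[OF Ff cX] .
  have Pc: "\<And>A. A \<in> F \<Longrightarrow> P \<subseteq> A \<Longrightarrow> c \<notin> A"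
  proof
    fix A assume "A \<in> F" "P \<subseteq> A" "c \<in> A"
    then have "A = {c}" using cB by blast
    then show False using \<open>P \<subseteq> A\<close> Psing by blast
  qed
  have gsub1: "\<And>A. A \<subseteq> g A" unfolding g_def by auto
  have gsub2: "\<And>A. g A \<subseteq> insert c A" unfolding g_def by auto
  have gmono: "\<And>A B. A \<subseteq> B \<Longrightarrow> g A \<subseteq> g B" unfolding g_def by auto
  have grefl: "\<And>A B. A \<in> F \<Longrightarrow> A \<noteq> {c} \<Longrightarrow> g A \<subseteq> g B \<Longrightarrow> A \<subseteq> B"
  proof -
    fix A B assume h: "A \<in> F" "A \<noteq> {c}" "g A \<subseteq> g B"
    have "c \<notin> A" using h(1,2) cB by blast
    moreover have "A \<subseteq> insert c B" using gsub1[of A] h(3) gsub2[of B] by blast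
    ultimately show "A \<subseteq> B" by blast
  qed
  have gc: "g {c} = {c}" by (rule gsing)
  have gcon: "\<And>A. A \<in> F \<Longrightarrow> c \<in> g A \<Longrightarrow> A = {c} \<or> P \<subseteq> A"
  proof -
    fix A assume "A \<in> F" "c \<in> g A"
    then show "A = {c} \<or> P \<subseteq> A" using cB unfolding g_def by (auto split: if_splits)
  qed
  have ginj: "\<And>A B. A \<in> F \<Longrightarrow> B \<in> F \<Longrightarrow> g A = g B \<Longrightarrow> A = B"
  proof -
    fix A B assume h: "A \<in> F" "B \<in> F" "g A = g B"
    show "A = B"
    proof (cases "A = {c}")
      case True
      then have "g A = {c}" using gc by simp
      then have "c \<in> g B" using h(3) by simp
      then have "B = {c} \<or> P \<subseteq> B" using gcon h(2) by simp
      then show ?thesis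
      proof
        assume "B = {c}" then show ?thesis using True by simp
      next
        assume "P \<subseteq> B"
        then have "a \<in> g B" "b \<in> g B" using abP gsub1[of B] by auto
        then have "a \<in> g A" "b \<in> g A" using h(3) by simp_all
        moreover have "g A = {c}" using True gc by simp
        ultimately show ?thesis using abP(3) by simp
      qed
    next
      case False
      show ?thesis
      proof (cases "B = {c}")
        case True
        then have "g B = {c}" using gc by simp
        then have "c \<in> g A" using h(3) by simp
        then have "A = {c} \<or> P \<subseteq> A" using gcon h(1) by simp
        then show ?thesis
        proof
          assume "A = {c}" then show ?thesis using True by simp
        next
          assume "P \<subseteq> A"
          then have "a \<in> g A" "b \<in> g A" using abP gsub1[of A] by auto
          then have "a \<in> g B" "b \<in> g B" using h(3) by simp_all
          moreover have "g B = {c}" using True gc by simp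
          ultimately show ?thesis using abP(3) by simp
        qed
      next
        case False2: False
        have "A \<subseteq> B" using grefl[OF h(1) False] h(3) by simp
        moreover have "B \<subseteq> A" using grefl[OF h(2) False2] h(3) by simp
        ultimately show ?thesis by (rule subset_antisym)
      qed
    qed
  qed
  have gP: "g P = insert c P" unfolding g_def by simp
  have f1: "F' \<subseteq> Pow X"
  proof
    fix y assume "y \<in> F'"
    then obtain A where A: "A \<in> F" "y = g A" unfolding F'_def by blast
    have "A \<subseteq> X" using FX A(1) by blast
    then show "y \<in> Pow X" using gsub2[of A] cX(1) A(2) by blast
  qed
  have f2: "{} \<notin> F'"
  proof
    assume "{} \<in> F'"
    then obtain A where A: "A \<in> F" "{} = g A" unfolding F'_def by blast
    then have "A = {}" using gsub1[of A] by blast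
    then show False using A(1) Fe by simp
  qed
  have f3: "laminar F'"
    unfolding laminar_def
  proof (intro ballI)
    fix y z assume "y \<in> F'" "z \<in> F'"
    then obtain A B where AB: "A \<in> F" "B \<in> F" "y = g A" "z = g B" unfolding F'_def by blast
    have "A \<inter> B = {} \<or> A \<subseteq> B \<or> B \<subseteq> A" using Fl AB(1,2) unfolding laminar_def by blast
    then show "y \<inter> z = {} \<or> y \<subseteq> z \<or> z \<subseteq> y"
    proof (elim disjE)
      assume "A \<subseteq> B" then show ?thesis using gmono AB(3,4) by blast
    next
      assume "B \<subseteq> A" then show ?thesis using gmono AB(3,4) by blast
    next
      assume dis: "A \<inter> B = {}"
      show ?thesis
      proof (cases "c \<in> g A \<and> c \<in> g B")
        case True
        then have hA: "A = {c} \<or> P \<subseteq> A" and hB: "B = {c} \<or> P \<subseteq> B" using gcon AB(1,2) by auto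
        show ?thesis
        proof (cases "A = {c}")
          case True2: True
          then have "y = {c}" using AB(3) gc by simp
          then show ?thesis using True AB(4) by blast
        next
          case False
          then have PA: "P \<subseteq> A" using hA by simp
          show ?thesis
          proof (cases "B = {c}")
            case True3: True
            then have "z = {c}" using AB(4) gc by simp
            then show ?thesis using True AB(3) by blast
          next
            case False3: False
            then have "P \<subseteq> B" using hB by simp
            then have "a \<in> A \<inter> B" using PA abP(1) by blast
            then show ?thesis using dis by blast
          qed
        qed
      next
        case False
        have "y \<inter> z \<subseteq> insert c A \<inter> insert c B" using gsub2 AB(3,4) by blast
        then have "y \<inter> z = {}" using False dis AB(3,4) by blast
        then show ?thesis by simp
      qed
    qed
  qed
  have f4: "\<forall>x\<in>X - {rho}. {x} \<in> F'"
  proof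
    fix x assume "x \<in> X - {rho}"
    then have "{x} \<in> F" using forest_basic(4)[OF Ff] by blast
    then have "g {x} \<in> F'" unfolding F'_def by blast
    then show "{x} \<in> F'" using gsing by simp
  qed
  have rhoA: "\<And>A. rho \<in> g A \<Longrightarrow> rho \<in> A" using gsub2 cX(2) by blast
  obtain R where R: "R \<in> F" "rho \<in> R" using forest_basic(5)[OF Ff] by (meson ex1_implies_ex)
  have f5: "\<exists>!C. C \<in> F' \<and> rho \<in> C"
  proof (rule ex1I[of _ "g R"])
    show "g R \<in> F' \<and> rho \<in> g R" using R gsub1[of R] unfolding F'_def by blast
  next
    fix C assume "C \<in> F' \<and> rho \<in> C"
    then obtain A where A: "A \<in> F" "C = g A" "rho \<in> C" unfolding F'_def by blast
    then have "rho \<in> A" using rhoA by simp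
    then have "A = R" using rho_unique[OF Ff A(1) R(1)] R(2) by simp
    then show "C = g R" using A(2) by simp
  qed
  have f6: "\<forall>C\<in>F'. rho \<in> C \<and> C \<noteq> {rho} \<longrightarrow> C - {rho} \<in> F'"
  proof (intro ballI impI)
    fix C assume "C \<in> F'" "rho \<in> C \<and> C \<noteq> {rho}"
    then obtain A where A: "A \<in> F" "C = g A" "rho \<in> C" "C \<noteq> {rho}" unfolding F'_def by blast
    then have rA: "rho \<in> A" using rhoA by simp
    have "A \<noteq> {rho}" using A(2,4) gsing by auto
    then have AF: "A - {rho} \<in> F" using forest_basic(6)[OF Ff A(1) rA] by simp
    have "g (A - {rho}) = g A - {rho}"
    proof (cases "P \<subseteq> A")
      case True
      then have "P \<subseteq> A - {rho}" using rP by blast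
      then show ?thesis using True cX(2) unfolding g_def by auto
    next
      case False
      then have "\<not> P \<subseteq> A - {rho}" by blast
      then show ?thesis using False unfolding g_def by simp
    qed
    then show "C - {rho} \<in> F'" using AF A(2) unfolding F'_def by (metis image_eqI)
  qed
  have Ff': "is_forest X rho F'" unfolding is_forest_def using f1 f2 f3 f4 f5 f6 by blast
  then show "is_forest X rho ((\<lambda>A. if P \<subseteq> A then insert c A else A) ` F)"
    unfolding F'_def g_def .
  have finF': "finite F'" using f1 fin by (meson finite_Pow_iff finite_subset)
  have finE: "\<forall>E\<in>F'. finite E" using f1 fin by (meson PowD finite_subset subsetD)
  have gPF: "insert c P \<in> F'" using PF gP unfolding F'_def by (metis image_eqI)
  have cF': "{c} \<in> F'" using cF gc unfolding F'_def by (metis image_eqI)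
  have parc: "is_parent F' {c} (insert c P)"
  proof -
    have "{c} \<subset> insert c P" using abP cP by auto
    moreover have "\<not>(\<exists>E\<in>F'. {c} \<subset> E \<and> E \<subset> insert c P)"
    proof
      assume "\<exists>E\<in>F'. {c} \<subset> E \<and> E \<subset> insert c P"
      then obtain A where A: "A \<in> F" "{c} \<subset> g A" "g A \<subset> insert c P" unfolding F'_def by blast
      have "c \<in> g A" using A(2) by blast
      then have "A = {c} \<or> P \<subseteq> A" using gcon A(1) by simp
      then show False
      proof
        assume "A = {c}" then show False using A(2) gc by simp
      next
        assume "P \<subseteq> A"
        then have "insert c P \<subseteq> g A" unfolding g_def by auto
        then show False using A(3) by blast
      qed
    qed
    ultimately show ?thesis unfolding is_parent_def using cF' gPF by simp
  qed
  define K where "K = edges F' - {({c}, insert c P)}"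
  have KE: "K \<subseteq> edges F'" unfolding K_def by blast
  have lamF': "laminar F'" "{} \<notin> F'" using f3 f2 by simp_all
  have clu: "\<And>A. A \<in> F \<Longrightarrow> cluster_after F' K (g A) = A"
  proof (rule set_eqI)
    fix A x assume AF: "A \<in> F"
    have gAF: "g A \<in> F'" using AF unfolding F'_def by blast
    show "x \<in> cluster_after F' K (g A) \<longleftrightarrow> x \<in> A"
    proof
      assume "x \<in> cluster_after F' K (g A)"
      then obtain C where C: "leafv F' x C" "(C, g A) \<in> K\<^sup>*" unfolding cluster_after_def by blast
      have "C \<subseteq> g A" using path_subset[OF KE C(2)] .
      moreover have xC: "x \<in> C" using C(1) unfolding leafv_def by simp
      ultimately have xg: "x \<in> g A" by blast
      show "x \<in> A"
      proof (cases "x = c")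
        case False
        then show ?thesis using xg gsub2[of A] by blast
      next
        case True
        have "leafv F' c C" using C(1) True by simp
        then have "C = {c}" using leafv_unique leaf_single[OF Ff' cX] by metis
        show ?thesis
        proof (cases "{c} = g A")
          case True2: True
          then have "g A = g {c}" using gc by simp
          then have "A = {c}" using ginj[OF AF cF] by simp
          then show ?thesis using True by simp
        next
          case False
          then have "({c}, insert c P) \<in> K"
            using path_first[OF lamF' KE _ _ parc] C(2) \<open>C = {c}\<close> by simp
          then show ?thesis unfolding K_def by simp
        qed
      qed
    next
      assume xA: "x \<in> A"
      have xX: "x \<in> X" using xA AF FX by blast
      show "x \<in> cluster_after F' K (g A)"
      proof (cases "x = c")
        case True
        then have "A = {c}" using cB AF xA by blast
        then have "g A = {c}" using gc by simp
        then have "({c}, g A) \<in> K\<^sup>*" by simp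
        then have "leafv F' x {c} \<and> ({c}, g A) \<in> K\<^sup>*" using leaf_single[OF Ff' cX] True by simp
        then show ?thesis unfolding cluster_after_def by (intro CollectI exI)
      next
        case False
        obtain C where C: "leafv F' x C" using leaf_exists[OF Ff' xX] by blast
        have CF: "C \<in> F'" "x \<in> C" using C unfolding leafv_def by simp_all
        have "x \<in> g A" using xA gsub1 by blast
        then have CgA: "C \<subseteq> g A" using C gAF unfolding leafv_def by blast
        have "(C, g A) \<in> {(D,E). is_parent F' D E \<and> x \<in> D}\<^sup>*"
          using path_up[OF finF' finE CF(1) gAF CgA CF(2)] .
        moreover have "{(D,E). is_parent F' D E \<and> x \<in> D} \<subseteq> K"
        proof (rule subsetI)
          fix p assume "p \<in> {(D,E). is_parent F' D E \<and> x \<in> D}"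
          then obtain D E where DE: "p = (D,E)" "is_parent F' D E" "x \<in> D" by blast
          have "D \<noteq> {c}" using DE(3) False by auto
          then show "p \<in> K" unfolding K_def edges_def using DE(1,2) by simp
        qed
        ultimately have "(C, g A) \<in> K\<^sup>*" by (meson rtrancl_mono subsetD)
        then show ?thesis using C unfolding cluster_after_def by blast
      qed
    qed
  qed
  have "delete_edges F' K = F"
  proof -
    have "cluster_after F' K ` F' = (\<lambda>A. cluster_after F' K (g A)) ` F"
      unfolding F'_def by (rule image_image)
    also have "\<dots> = (\<lambda>A. A) ` F" using clu by (rule image_cong[OF refl])
    finally show ?thesis unfolding delete_edges_def using Fe by simp
  qed
  then have "\<exists>K \<subseteq> edges F'. F = delete_edges F' K" using KE by (intro exI[of _ K]) simp
  then show "subforest F ((\<lambda>A. if P \<subseteq> A then insert c A else A) ` F)"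
    unfolding subforest_def F'_def g_def .
  have ccomp: "{c} \<in> components F"
  proof -
    have "\<not>(\<exists>D\<in>F. {c} \<subset> D)"
    proof
      assume "\<exists>D\<in>F. {c} \<subset> D"
      then obtain D where D: "D \<in> F" "{c} \<subset> D" by blast
      have "c \<in> D" using D(2) by blast
      then have "D = {c}" using cB D(1) by simp
      then show False using D(2) by simp
    qed
    then show ?thesis unfolding components_def using cF by simp
  qed
  have compF: "components F \<subseteq> F" unfolding components_def by (rule Collect_subset)
  have comp_eq: "components F' = g ` (components F - {{c}})"
  proof (rule set_eqI)
    fix y
    show "y \<in> components F' \<longleftrightarrow> y \<in> g ` (components F - {{c}})"
    proof
      assume "y \<in> components F'"
      then have y: "y \<in> F'" "\<forall>D\<in>F'. \<not> y \<subset> D" unfolding components_def by simp_all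
      then obtain A where A: "A \<in> F" "y = g A" unfolding F'_def by blast
      have Anc: "A \<noteq> {c}"
      proof
        assume "A = {c}"
        then have "y \<subset> insert c P" using A(2) gc abP cP by auto
        moreover have "\<not> y \<subset> insert c P" using bspec[OF y(2) gPF] .
        ultimately show False by simp
      qed
      have "\<forall>B\<in>F. \<not> A \<subset> B"
      proof (intro ballI notI)
        fix B assume B: "B \<in> F" "A \<subset> B"
        have "g A \<subseteq> g B" using gmono B(2) by (simp add: psubset_imp_subset)
        moreover have "A \<noteq> B" using B(2) by simp
        then have "g A \<noteq> g B" using ginj[OF A(1) B(1)] by metis
        ultimately have "y \<subset> g B" using A(2) by (simp add: psubset_eq)
        moreover have "g B \<in> F'" using B(1) unfolding F'_def by (rule imageI)
        then have "\<not> y \<subset> g B" using bspec[OF y(2)] by simp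
        ultimately show False by simp
      qed
      then have "A \<in> components F - {{c}}" unfolding components_def using A(1) Anc by simp
      then show "y \<in> g ` (components F - {{c}})" using A(2) by (rule rev_image_eqI)
    next
      assume "y \<in> g ` (components F - {{c}})"
      then obtain A where A0: "A \<in> components F - {{c}}" "y = g A" by (rule imageE)
      then have A: "A \<in> F" "\<forall>B\<in>F. \<not> A \<subset> B" "A \<noteq> {c}" "y = g A"
        unfolding components_def by simp_all
      have "\<forall>D\<in>F'. \<not> y \<subset> D"
      proof (intro ballI notI)
        fix D assume D: "D \<in> F'" "y \<subset> D"
        have "D \<in> g ` F" using D(1) unfolding F'_def .
        then obtain B where B: "B \<in> F" "D = g B" by (rule imageE) simp
        have gAB: "g A \<subset> g B" using D(2) A(4) B(2) by simp
        have "A \<subseteq> B" using grefl[OF A(1) A(3)] gAB by (simp add: psubset_imp_subset)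
        moreover have "A \<noteq> B" using gAB by auto
        ultimately have "A \<subset> B" by (simp add: psubset_eq)
        moreover have "\<not> A \<subset> B" using bspec[OF A(2) B(1)] .
        ultimately show False by simp
      qed
      moreover have "y \<in> F'" using A(1,4) unfolding F'_def by simp
      ultimately show "y \<in> components F'" unfolding components_def by simp
    qed
  qed
  have finF: "finite F" using FX fin by (meson finite_Pow_iff finite_subset)
  have finC: "finite (components F)" using finF compF by (rule finite_subset[rotated])
  have injg: "inj_on g (components F - {{c}})"
  proof (rule inj_onI)
    fix A B assume "A \<in> components F - {{c}}" "B \<in> components F - {{c}}" "g A = g B"
    then show "A = B" using ginj compF by (meson DiffD1 subsetD)
  qed
  have "Ord F' = card (components F - {{c}})"
    unfolding Ord_def comp_eq using card_image[OF injg] .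
  also have "\<dots> = card (components F) - 1" using card_Diff_singleton[OF ccomp] .
  also have "\<dots> < card (components F)" using finC ccomp
    by (metis card_gt_0_iff diff_less empty_iff zero_less_one)
  finally have "Ord F' < Ord F" unfolding Ord_def .
  then show "Ord ((\<lambda>A. if P \<subseteq> A then insert c A else A) ` F) < Ord F"
    unfolding F'_def g_def .
qed


theorem lemma4p5:
  fixes X :: "'a set" and rho :: 'a and F1 F2 F :: "'a set set" and S :: "'a set"
  assumes "finite X" and "rho \<in> X"
    and "is_forest X rho F1" and "is_forest X rho F2"
    and "max_sibling_set F2 S"
    and "sibling_set F1 S"
    and "maximal_agreement_forest X rho F1 F2 F"
    and "\<exists>a\<in>S. \<exists>b\<in>S. a \<noteq> b \<and> siblings F a b"
  shows "max_sibling_set F S"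
proof -
  note fin = assms(1) and G1 = assms(3) and G2 = assms(4)
  have af: "agreement_forest X rho F1 F2 F"
    and nomore: "\<not> (\<exists>F'. agreement_forest X rho F1 F2 F' \<and> subforest F F' \<and> Ord F' < Ord F)"
    using assms(7) unfolding maximal_agreement_forest_def by simp_all
  have Ff: "is_forest X rho F" and sf1: "subforest F F1" and sf2: "subforest F F2"
    using af unfolding agreement_forest_def by simp_all
  obtain K1 where K1: "K1 \<subseteq> edges F1" "F = delete_edges F1 K1" using sf1 unfolding subforest_def by blast
  obtain K2 where K2: "K2 \<subseteq> edges F2" "F = delete_edges F2 K2" using sf2 unfolding subforest_def by blast
  have ms: "S \<noteq> {}" "\<exists>p. (\<forall>a\<in>S. leaf_parent F2 a p) \<and>
          degree F2 p = (if has_parent F2 p then card S + 1 else card S)"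
    using assms(5) unfolding max_sibling_set_def by simp_all
  obtain p where p: "\<forall>a\<in>S. leaf_parent F2 a p"
    and pdeg: "degree F2 p = (if has_parent F2 p then card S + 1 else card S)" using ms(2) by blast
  have SX: "\<And>s. s \<in> S \<Longrightarrow> s \<in> X" and Sr: "\<And>s. s \<in> S \<Longrightarrow> s \<noteq> rho"
    and Sp: "\<And>s. s \<in> S \<Longrightarrow> is_parent F2 {s} p"
    using lp_single[OF G2] p by blast+
  have SsubX: "S \<subseteq> X" using SX by blast
  have finS: "finite S" using finite_subset[OF SsubX fin] .
  obtain a b where ab: "a \<in> S" "b \<in> S" "a \<noteq> b" "siblings F a b" using assms(8) by blast
  obtain P where P: "leaf_parent F a P" "leaf_parent F b P" using ab(4) unfolding siblings_def by blast
  have pa: "is_parent F {a} P" and pb: "is_parent F {b} P"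
    using lp_single(3)[OF Ff P(1)] lp_single(3)[OF Ff P(2)] by simp_all
  have "siblings F1 a b" using assms(6) ab unfolding sibling_set_def by blast
  then obtain q where q: "leaf_parent F1 a q" "leaf_parent F1 b q" unfolding siblings_def by blast
  have qa: "is_parent F1 {a} q" and qb: "is_parent F1 {b} q"
    using lp_single(3)[OF G1 q(1)] lp_single(3)[OF G1 q(2)] by simp_all
  have Sq: "\<And>s. s \<in> S \<Longrightarrow> is_parent F1 {s} q"
  proof -
    fix s assume sS: "s \<in> S"
    show "is_parent F1 {s} q"
    proof (cases "s = a")
      case True then show ?thesis using qa by simp
    next
      case False
      then have "a \<noteq> s" by simp
      then have "siblings F1 a s" using assms(6) ab(1) sS unfolding sibling_set_def by blast
      then obtain q' where q': "leaf_parent F1 a q'" "leaf_parent F1 s q'" unfolding siblings_def by blast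
      have "is_parent F1 {a} q'" using lp_single(3)[OF G1 q'(1)] .
      then have "q' = q" using parent_unique[OF forest_basic(3,2)[OF G1] _ qa] by simp
      then show ?thesis using lp_single(3)[OF G1 q'(2)] by simp
    qed
  qed
  have aX: "a \<in> X" "a \<noteq> rho" and bX: "b \<in> X" "b \<noteq> rho" using SX Sr ab by simp_all
  note k2 = key[OF G2 Ff K2(1) K2(2) pa pb ab(3) aX bX Sp[OF ab(1)] Sp[OF ab(2)]]
  have aP: "a \<in> P" and bP: "b \<in> P" using pa pb unfolding is_parent_def by auto
  have PF: "P \<in> F" using pa unfolding is_parent_def by simp
  have rP: "rho \<notin> P" using parent_no_rho[OF Ff pa pb ab(3)] .
  have SP: "S \<subseteq> P"
  proof (rule ccontr)
    assume "\<not> S \<subseteq> P"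
    then obtain c where c: "c \<in> S" "c \<notin> P" by blast
    have cX: "c \<in> X" "c \<noteq> rho" using SX Sr c(1) by simp_all
    note r2 = key2[OF G2 Ff K2(1) K2(2) pa pb ab(3) aX bX Sp[OF ab(1)] Sp[OF ab(2)] cX Sp[OF c(1)] c(2)]
    note r1 = key2[OF G1 Ff K1(1) K1(2) pa pb ab(3) aX bX qa qb cX Sq[OF c(1)] c(2)]
    note gl = glue[OF Ff fin cX r2(2) PF aP bP ab(3) rP c(2)]
    have "agreement_forest X rho F1 F2 ((\<lambda>A. if P \<subseteq> A then insert c A else A) ` F)"
      unfolding agreement_forest_def using gl(1) r1(3) r2(3) by simp
    then show False using nomore gl(2) gl(3) by blast
  qed
  have chp: "children F2 p = (\<lambda>s. {s}) ` S"
  proof -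
    have sub: "(\<lambda>s. {s}) ` S \<subseteq> children F2 p" unfolding children_def using Sp by blast
    have "children F2 p \<subseteq> F2" unfolding children_def is_parent_def by blast
    moreover have "finite F2" using forest_basic(1)[OF G2] fin by (meson finite_Pow_iff finite_subset)
    ultimately have finch: "finite (children F2 p)" by (rule finite_subset)
    have "card (children F2 p) = card S" using pdeg unfolding degree_def by (simp split: if_splits)
    moreover have "card ((\<lambda>s. {s}) ` S) = card S" by (rule card_image) (simp add: inj_on_def)
    ultimately show ?thesis using card_subset_eq[OF finch sub] by simp
  qed
  have PS: "P \<subseteq> S"
  proof
    fix x assume xP: "x \<in> P"
    have xX: "x \<in> X" "x \<noteq> rho" using xP rP forest_basic(1)[OF Ff] PF by auto
    have "x \<in> cluster_after F2 K2 p" using xP k2(1) by simp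
    then have xp: "({x},p) \<in> K2\<^sup>*" using mem_cluster[OF G2 xX] by simp
    have "{x} \<noteq> p"
    proof
      assume "{x} = p"
      moreover have "{a} \<subset> p" "{b} \<subset> p" using Sp ab(1,2) unfolding is_parent_def by auto
      ultimately show False using ab(3) by auto
    qed
    then obtain z where z: "({x},z) \<in> K2\<^sup>*" "(z,p) \<in> K2" using xp by (meson rtranclE)
    have "z \<in> children F2 p" using z(2) K2(1) unfolding children_def edges_def by auto
    then obtain s where s: "s \<in> S" "z = {s}" using chp by auto
    have "{x} \<subseteq> z" using path_subset[OF K2(1) z(1)] .
    then have "x = s" using s(2) by auto
    then show "x \<in> S" using s(1) by simp
  qed
  have PeqS: "P = S" using SP PS by (rule subset_antisym[rotated])
  have SPar: "\<And>s. s \<in> S \<Longrightarrow> is_parent F {s} P"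
    using k2(3) Sp SP SX Sr by blast
  have SLP: "\<And>s. s \<in> S \<Longrightarrow> leaf_parent F s P"
    unfolding leaf_parent_def using SPar leaf_single[OF Ff] SX Sr by blast
  have chP: "children F P = (\<lambda>s. {s}) ` S"
  proof (rule set_eqI)
    fix C
    show "C \<in> children F P \<longleftrightarrow> C \<in> (\<lambda>s. {s}) ` S"
    proof
      assume "C \<in> children F P"
      then have C: "is_parent F C P" unfolding children_def by simp
      have Cs: "C \<in> F" "C \<subset> P" using C unfolding is_parent_def by simp_all
      have "C \<noteq> {}" using Cs(1) forest_basic(2)[OF Ff] by metis
      then obtain x where xC: "x \<in> C" by blast
      then have xS: "x \<in> S" using Cs(2) PeqS by blast
      have px: "is_parent F {x} P" using SPar[OF xS] .
      have nb: "\<forall>E\<in>F. \<not> ({x} \<subset> E \<and> E \<subset> P)" using px unfolding is_parent_def by simp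
      have "\<not> ({x} \<subset> C \<and> C \<subset> P)" using bspec[OF nb Cs(1)] .
      then have "\<not> {x} \<subset> C" using Cs(2) by simp
      moreover have "{x} \<subseteq> C" using xC by simp
      ultimately have "C = {x}" by (simp add: psubset_eq)
      then show "C \<in> (\<lambda>s. {s}) ` S" using xS by simp
    next
      assume "C \<in> (\<lambda>s. {s}) ` S"
      then obtain s where "s \<in> S" "C = {s}" by blast
      then show "C \<in> children F P" unfolding children_def using SPar by simp
    qed
  qed
  have cardch: "card (children F P) = card S"
    unfolding chP by (rule card_image) (simp add: inj_on_def)
  have "sibling_set F S" unfolding sibling_set_def siblings_def using SLP by blast
  moreover have "\<forall>a\<in>S. leaf_parent F a P" using SLP by blast
  moreover have "degree F P = (if has_parent F P then card S + 1 else card S)"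
    unfolding degree_def cardch by simp
  ultimately show ?thesis unfolding max_sibling_set_def using ms(1) by blast
qed

end
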